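(* Let $m\ge1$, $m_\alpha\ge1$ be integers and consider real observations $x_1,x_2,\dots$ and probability measures $\mathbb{P}_v$, $v\in\{1,2,\dots\}\cup\{\infty\}$, under which the $x_n$ are mutually independent, $x_n\sim\mathcal{N}(\mu_{0},\sigma^2)$ if $n<v$ or $n\ge v+m$, and $x_n\sim\mathcal{N}(\mu_{1},\sigma^2)$ if $v\le n<v+m$, where $\mu_0$ and $\sigma>0$ are known and $\mu_1$ is the (unknown) actual change parameter. Let $\tilde\mu_1\ne\mu_0$ be a tuned change parameter and define $$y_n=\mathrm{LLR}_{\mathrm c}(n)=\frac{\tilde\mu_1-\mu_0}{\sigma^2}\Big(x_n-\frac{\tilde\mu_1+\mu_0}{2}\Big),$$ which is the log-likelihood ratio of $\mathcal{N}(\tilde\mu_1,\sigma^2)$ against $\mathcal{N}(\mu_0,\sigma^2)$ at $x_n$. Then $y_n$ is Gaussian with variance $\sigma_y^2=-2\mu_{y,0}$ under both distributions, with mean $\mu_{y,0}=-\frac{(\tilde\mu_1-\mu_0)^2}{2\sigma^2}$ when $x_n\sim\mathcal{N}(\mu_0,\sigma^2)$ and mean $\mu_{y,1}=\frac{\tilde\mu_1-\mu_0}{\sigma^2}\big(\mu_1-\frac{\tilde\mu_1+\mu_0}{2}\big)$ when $x_n\sim\mathcal{N}(\mu_1,\sigma^2)$. Let $T_{\mathrm{F,C}}(h_{\mathrm c})=\inf\{n\ge m:\sum_{i=n-m+1}^n y_i\ge h_{\mathrm c}\}$ and let $\Phi$ be the standard normal cdf. Then for every $h_{\mathrm c}\in\mathbb{R}$,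 $$\mathbb{P}_{\mathrm{md}}\big(T_{\mathrm{F,C}}(h_{\mathrm c}),m\big)\le\beta_{\mathrm C}(h_{\mathrm c},m)=\Phi\Big(\frac{h_{\mathrm c}-m\mu_{y,1}}{\sqrt{m\sigma_y^2}}\Big),\qquad \mathbb{P}_{\mathrm{fa}}\big(T_{\mathrm{F,C}}(h_{\mathrm c}),m_\alpha\big)\le1-\Big[\Phi\Big(\frac{h_{\mathrm c}-m\mu_{y,0}}{\sqrt{m\sigma_y^2}}\Big)\Big]^{m_\alpha},$$ and for $\tilde\alpha\in(0,1)$ the threshold $$h_{\mathrm c}(\tilde\alpha)=\sqrt{m\sigma_y^2}\,\Phi^{-1}\Big[(1-\tilde\alpha)^{1/m_\alpha}\Big]+m\mu_{y,0}$$ guarantees $\mathbb{P}_{\mathrm{fa}}\big(T_{\mathrm{F,C}}(h_{\mathrm c}(\tilde\alpha)),m_\alpha\big)\le\tilde\alpha$.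
   Context: For a stopping time $T$ (with respect to the filtration of $x_1,x_2,\dots$): the worst-case probability of false alarm within a window of length $m_\alpha$ is $\mathbb{P}_{\mathrm{fa}}(T,m_\alpha)=\sup_{l\ge1}\mathbb{P}_\infty(l\le T<l+m_\alpha)$; the worst-case probability of missed detection with maximal permitted delay $m$ is $\mathbb{P}_{\mathrm{md}}(T,m)=\sup_{v\ge1}\mathbb{P}_v(T\ge v+m\mid T\ge v)$. *)

theory Defs
  imports "HOL-Probability.Probability" "HOL-Library.Extended_Nat"
begin

definition Phi :: "real \<Rightarrow> real" where
  "Phi = cdf (density lborel std_normal_density)"

definition Phi_inv :: "real \<Rightarrow> real" where
  "Phi_inv p = (THE z. Phi z = p)"

text \<open>Mean of observation n under P_v (v = infinity: no change).\<close>
definition obs_mean :: "real \<Rightarrow> real \<Rightarrow> nat \<Rightarrow> enat \<Rightarrow> nat \<Rightarrow> real" where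
  "obs_mean \<mu>0 \<mu>1 m v n = (if v \<le> enat n \<and> enat n < v + enat m then \<mu>1 else \<mu>0)"

definition LLRc :: "real \<Rightarrow> real \<Rightarrow> real \<Rightarrow> real \<Rightarrow> real" where
  "LLRc \<mu>0 \<mu>1t \<sigma> xv = (\<mu>1t - \<mu>0) / \<sigma>\<^sup>2 * (xv - (\<mu>1t + \<mu>0) / 2)"

definition T_FC :: "nat \<Rightarrow> real \<Rightarrow> (nat \<Rightarrow> real) \<Rightarrow> enat" where
  "T_FC m h ys =
     (if \<exists>n\<ge>m. (\<Sum>i\<in>{n-m+1..n}. ys i) \<ge> h
      then enat (LEAST n. n \<ge> m \<and> (\<Sum>i\<in>{n-m+1..n}. ys i) \<ge> h) else \<infinity>)"

text \<open>Worst-case false alarm probability within window ma, under P_infinity.\<close>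
definition P_fa :: "'a measure \<Rightarrow> ('a \<Rightarrow> enat) \<Rightarrow> nat \<Rightarrow> real" where
  "P_fa M T ma = (SUP l\<in>{1..}. measure M {\<omega> \<in> space M. enat l \<le> T \<omega> \<and> T \<omega> < enat (l + ma)})"

definition cprob :: "'a measure \<Rightarrow> 'a set \<Rightarrow> 'a set \<Rightarrow> real" where
  "cprob M A B = measure M (A \<inter> B) / measure M B"

definition P_md :: "(enat \<Rightarrow> 'a measure) \<Rightarrow> ('a \<Rightarrow> enat) \<Rightarrow> nat \<Rightarrow> real" where
  "P_md P T m = (SUP v\<in>{1..}. cprob (P (enat v))
       {\<omega> \<in> space (P (enat v)). T \<omega> \<ge> enat (v + m)}
       {\<omega> \<in> space (P (enat v)). T \<omega> \<ge> enat v})"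

end

theory Submission
  imports Defs
begin

lemma cheb1:
  fixes f g :: "'b \<Rightarrow> real"
  assumes N: "prob_space N" and fm[measurable]: "f \<in> borel_measurable N" and gm[measurable]: "g \<in> borel_measurable N"
    and fb: "\<And>a. a \<in> space N \<Longrightarrow> 0 \<le> f a \<and> f a \<le> 1"
    and gb: "\<And>a. a \<in> space N \<Longrightarrow> 0 \<le> g a \<and> g a \<le> 1"
    and mono: "\<And>a b. a \<in> space N \<Longrightarrow> b \<in> space N \<Longrightarrow> 0 \<le> (f a - f b) * (g a - g b)"
  shows "(\<integral>x. f x \<partial>N) * (\<integral>x. g x \<partial>N) \<le> (\<integral>x. f x * g x \<partial>N)"
proof -
  interpret prob_space N by (rule N)
  have ib: "integrable N h" if "(h :: _ \<Rightarrow> real) \<in> borel_measurable N" "\<And>a. a \<in> space N \<Longrightarrow> \<bar>h a\<bar> \<le> 1" for h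
    by (rule integrable_const_bound[where B=1]) (use that in auto)
  have [simp]: "integrable N f" by (rule ib) (auto dest: fb)
  have [simp]: "integrable N g" by (rule ib) (auto dest: gb)
  have [simp]: "integrable N (\<lambda>x. f x * g x)"
  proof (rule ib)
    fix a assume "a \<in> space N"
    then show "\<bar>f a * g a\<bar> \<le> 1" using fb[of a] gb[of a] by (simp add: abs_mult mult_le_one)
  qed simp
  define F where "F = (\<integral>x. f x \<partial>N)"
  define G where "G = (\<integral>x. g x \<partial>N)"
  define H where "H = (\<integral>x. f x * g x \<partial>N)"
  have pw: "0 \<le> f a * g a - f a * G - F * g a + H" if a: "a \<in> space N" for a
  proof -
    have "0 \<le> (\<integral>b. (f a - f b) * (g a - g b) \<partial>N)"
      by (rule integral_nonneg_AE) (auto intro: mono a)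
    also have "(\<lambda>b. (f a - f b) * (g a - g b)) = (\<lambda>b. (f a * g a + f b * g b) - (f a * g b + g a * f b))"
      by (auto simp: algebra_simps)
    also have "(\<integral>b. (f a * g a + f b * g b) - (f a * g b + g a * f b) \<partial>N) = f a * g a - f a * G - F * g a + H"
      by (simp add: F_def G_def H_def prob_space)
    finally show ?thesis .
  qed
  have "0 \<le> (\<integral>a. f a * g a - f a * G - F * g a + H \<partial>N)"
    by (rule integral_nonneg_AE) (auto intro: pw)
  also have "(\<integral>a. f a * g a - f a * G - F * g a + H \<partial>N) = H - F * G - F * G + H"
    by (simp add: F_def G_def H_def mult.commute prob_space)
  finally show ?thesis unfolding F_def G_def H_def by simp
qed

lemma prob_int01:
  fixes h :: "'b \<Rightarrow> real"
  assumes N: "prob_space N" and hm: "h \<in> borel_measurable N"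
    and hb: "\<And>a. a \<in> space N \<Longrightarrow> 0 \<le> h a \<and> h a \<le> 1"
  shows "integrable N h" "0 \<le> (\<integral>x. h x \<partial>N)" "(\<integral>x. h x \<partial>N) \<le> 1"
proof -
  interpret prob_space N by (rule N)
  show i: "integrable N h"
    by (rule integrable_const_bound[where B=1]) (use hm hb in auto)
  show "0 \<le> (\<integral>x. h x \<partial>N)" by (rule integral_nonneg_AE) (use hb in auto)
  have "(\<integral>x. h x \<partial>N) \<le> (\<integral>x. 1 \<partial>N)"
    by (rule integral_mono) (use i hb in auto)
  then show "(\<integral>x. h x \<partial>N) \<le> 1" by (simp add: prob_space)
qed

lemma harris:
  fixes M :: "nat \<Rightarrow> real measure" and R :: "real \<Rightarrow> real \<Rightarrow> bool"
  assumes I: "finite I" and Mp: "\<And>i. prob_space (M i)" and Rt: "\<And>a b. R a b \<or> R b a"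
  shows "\<And>f g :: (nat \<Rightarrow> real) \<Rightarrow> real. f \<in> borel_measurable (PiM I M) \<Longrightarrow> g \<in> borel_measurable (PiM I M) \<Longrightarrow>
    (\<And>x. x \<in> space (PiM I M) \<Longrightarrow> 0 \<le> f x \<and> f x \<le> 1) \<Longrightarrow>
    (\<And>x. x \<in> space (PiM I M) \<Longrightarrow> 0 \<le> g x \<and> g x \<le> 1) \<Longrightarrow>
    (\<And>x y. x \<in> space (PiM I M) \<Longrightarrow> y \<in> space (PiM I M) \<Longrightarrow> (\<forall>i\<in>I. R (x i) (y i)) \<Longrightarrow> f y \<le> f x) \<Longrightarrow>
    (\<And>x y. x \<in> space (PiM I M) \<Longrightarrow> y \<in> space (PiM I M) \<Longrightarrow> (\<forall>i\<in>I. R (x i) (y i)) \<Longrightarrow> g y \<le> g x) \<Longrightarrow>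
    (\<integral>x. f x \<partial>PiM I M) * (\<integral>x. g x \<partial>PiM I M) \<le> (\<integral>x. f x * g x \<partial>PiM I M)"
  using I
proof (induction I rule: finite_induct)
  case empty
  show ?case by (simp add: PiM_empty lebesgue_integral_count_space_finite)
next
  case (insert i I f g)
  interpret PS: product_sigma_finite M
    unfolding product_sigma_finite_def using Mp prob_space_imp_sigma_finite by blast
  interpret Mi: prob_space "M i" by (rule Mp)
  define J where "J = insert i I"
  have PJ: "prob_space (PiM J M)" by (rule prob_space_PiM) (simp add: Mp)
  have PI: "prob_space (PiM I M)" by (rule prob_space_PiM) (simp add: Mp)
  note fm = insert.prems(1)[folded J_def] and gm = insert.prems(2)[folded J_def]
  note fb = insert.prems(3)[folded J_def] and gb = insert.prems(4)[folded J_def]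
  note fmon = insert.prems(5)[folded J_def] and gmon = insert.prems(6)[folded J_def]
  have Rr: "R a a" for a using Rt[of a a] by auto
  have upd_sp: "z(i:=a) \<in> space (PiM J M)" if "z \<in> space (PiM I M)" "a \<in> space (M i)" for z a
    using measurable_space[OF measurable_component_update[OF that(1) insert.hyps(2)] that(2)]
    by (simp add: J_def)
  have upd_meas: "(\<lambda>(z, a). z(i:=a)) \<in> measurable (PiM I M \<Otimes>\<^sub>M M i) (PiM J M)"
    using measurable_fun_upd[where I=J and J=I and i=i and N="PiM I M \<Otimes>\<^sub>M M i" and f=fst and M=M and h=snd] by (simp add: J_def split_beta')
  have compm: "(\<lambda>(z, a). h (z(i:=a))) \<in> borel_measurable (PiM I M \<Otimes>\<^sub>M M i)"
    if "h \<in> borel_measurable (PiM J M)" for h :: "_ \<Rightarrow> real"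
    using measurable_comp[OF upd_meas that] by (simp add: comp_def split_beta')
  have secm: "(\<lambda>a. h (z(i:=a))) \<in> borel_measurable (M i)"
    if "h \<in> borel_measurable (PiM J M)" "z \<in> space (PiM I M)" for h :: "_ \<Rightarrow> real" and z
    using measurable_comp[OF measurable_component_update[OF that(2) insert.hyps(2)] that(1)[unfolded J_def]]
    by (simp add: comp_def)
  have fgm: "(\<lambda>x. f x * g x) \<in> borel_measurable (PiM J M)" using fm gm by measurable
  have fgb: "0 \<le> f x * g x \<and> f x * g x \<le> 1" if "x \<in> space (PiM J M)" for x
    using fb[OF that] gb[OF that] by (simp add: mult_le_one)
  define F where "F z = (\<integral>a. f (z(i:=a)) \<partial>M i)" for z
  define G where "G z = (\<integral>a. g (z(i:=a)) \<partial>M i)" for z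
  define H where "H z = (\<integral>a. f (z(i:=a)) * g (z(i:=a)) \<partial>M i)" for z
  have ins: "(\<integral>x. h x \<partial>PiM J M) = (\<integral>z. (\<integral>a. h (z(i:=a)) \<partial>M i) \<partial>PiM I M)"
    if "h \<in> borel_measurable (PiM J M)" "\<And>x. x \<in> space (PiM J M) \<Longrightarrow> 0 \<le> h x \<and> h x \<le> 1" for h :: "_ \<Rightarrow> real"
    unfolding J_def by (rule PS.product_integral_insert[OF insert.hyps(1,2)])
      (rule prob_int01(1)[OF PJ that, unfolded J_def])
  have intm: "(\<lambda>z. \<integral>a. h (z(i:=a)) \<partial>M i) \<in> borel_measurable (PiM I M)"
    if "h \<in> borel_measurable (PiM J M)" for h :: "_ \<Rightarrow> real"
    using sigma_finite_measure.borel_measurable_lebesgue_integral[OF prob_space_imp_sigma_finite[OF Mp], of "\<lambda>z a. h (z(i:=a))" "PiM I M"] compm[OF that]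
    by simp
  have intb: "0 \<le> (\<integral>a. h (z(i:=a)) \<partial>M i) \<and> (\<integral>a. h (z(i:=a)) \<partial>M i) \<le> 1"
    if "h \<in> borel_measurable (PiM J M)" "\<And>x. x \<in> space (PiM J M) \<Longrightarrow> 0 \<le> h x \<and> h x \<le> 1"
      "z \<in> space (PiM I M)" for h :: "_ \<Rightarrow> real" and z
    using prob_int01(2,3)[OF Mp secm[OF that(1,3)]] that(2)[OF upd_sp[OF that(3)]] by auto
  have intmono: "(\<integral>a. h (z'(i:=a)) \<partial>M i) \<le> (\<integral>a. h (z(i:=a)) \<partial>M i)"
    if "h \<in> borel_measurable (PiM J M)" "\<And>x. x \<in> space (PiM J M) \<Longrightarrow> 0 \<le> h x \<and> h x \<le> 1"
      "\<And>x y. x \<in> space (PiM J M) \<Longrightarrow> y \<in> space (PiM J M) \<Longrightarrow> (\<forall>i\<in>J. R (x i) (y i)) \<Longrightarrow> h y \<le> h x"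
      "z \<in> space (PiM I M)" "z' \<in> space (PiM I M)" "\<forall>j\<in>I. R (z j) (z' j)" for h :: "_ \<Rightarrow> real" and z z'
  proof (rule integral_mono)
    show "integrable (M i) (\<lambda>a. h (z'(i:=a)))"
      using prob_int01(1)[OF Mp secm[OF that(1,5)]] that(2)[OF upd_sp[OF that(5)]] by auto
    show "integrable (M i) (\<lambda>a. h (z(i:=a)))"
      using prob_int01(1)[OF Mp secm[OF that(1,4)]] that(2)[OF upd_sp[OF that(4)]] by auto
    fix a assume a: "a \<in> space (M i)"
    show "h (z'(i:=a)) \<le> h (z(i:=a))"
      by (rule that(3)[OF upd_sp[OF that(4) a] upd_sp[OF that(5) a]]) (use that(6) Rr in \<open>auto simp: J_def\<close>)
  qed
  have Fm: "F \<in> borel_measurable (PiM I M)" unfolding F_def by (rule intm[OF fm])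
  have Gm: "G \<in> borel_measurable (PiM I M)" unfolding G_def by (rule intm[OF gm])
  have Hm: "H \<in> borel_measurable (PiM I M)" unfolding H_def by (rule intm[OF fgm])
  have Fb: "0 \<le> F z \<and> F z \<le> 1" if "z \<in> space (PiM I M)" for z unfolding F_def by (rule intb[OF fm fb that])
  have Gb: "0 \<le> G z \<and> G z \<le> 1" if "z \<in> space (PiM I M)" for z unfolding G_def by (rule intb[OF gm gb that])
  have Hb: "0 \<le> H z \<and> H z \<le> 1" if "z \<in> space (PiM I M)" for z unfolding H_def by (rule intb[OF fgm fgb that])
  have IH: "(\<integral>z. F z \<partial>PiM I M) * (\<integral>z. G z \<partial>PiM I M) \<le> (\<integral>z. F z * G z \<partial>PiM I M)"
  proof (rule insert.IH[OF Fm Gm Fb Gb])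
    fix x y assume "x \<in> space (PiM I M)" "y \<in> space (PiM I M)" "\<forall>i\<in>I. R (x i) (y i)"
    then show "F y \<le> F x" "G y \<le> G x" unfolding F_def G_def
      by (auto intro!: intmono[OF fm fb fmon] intmono[OF gm gb gmon])
  qed
  have pw: "F z * G z \<le> H z" if z: "z \<in> space (PiM I M)" for z
    unfolding F_def G_def H_def
  proof (rule cheb1[OF Mp secm[OF fm z] secm[OF gm z]])
    fix a assume a: "a \<in> space (M i)"
    show "0 \<le> f (z(i:=a)) \<and> f (z(i:=a)) \<le> 1" by (rule fb[OF upd_sp[OF z a]])
    show "0 \<le> g (z(i:=a)) \<and> g (z(i:=a)) \<le> 1" by (rule gb[OF upd_sp[OF z a]])
    fix b assume b: "b \<in> space (M i)"
    have zz: "\<forall>j\<in>J. R ((z(i:=a)) j) ((z(i:=b)) j)" if "R a b" for a b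
      using that Rr by (auto simp: J_def)
    show "0 \<le> (f (z(i:=a)) - f (z(i:=b))) * (g (z(i:=a)) - g (z(i:=b)))"
    proof (cases "R a b")
      case True
      then show ?thesis
        using fmon[OF upd_sp[OF z a] upd_sp[OF z b] zz] gmon[OF upd_sp[OF z a] upd_sp[OF z b] zz]
        by (intro mult_nonneg_nonneg) (simp_all del: fun_upd_apply)
    next
      case False
      then have "R b a" using Rt by blast
      then show ?thesis
        using fmon[OF upd_sp[OF z b] upd_sp[OF z a] zz] gmon[OF upd_sp[OF z b] upd_sp[OF z a] zz]
        by (intro mult_nonpos_nonpos) (simp_all del: fun_upd_apply)
    qed
  qed
  have le: "(\<integral>z. F z * G z \<partial>PiM I M) \<le> (\<integral>z. H z \<partial>PiM I M)"
  proof (rule integral_mono)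
    show "integrable (PiM I M) (\<lambda>z. F z * G z)"
      by (rule prob_int01(1)[OF PI]) (use Fm Gm in measurable, use Fb Gb in \<open>auto simp: mult_le_one\<close>)
    show "integrable (PiM I M) H" by (rule prob_int01(1)[OF PI Hm Hb])
  qed (rule pw)
  have e1: "(\<integral>x. f x \<partial>PiM J M) = (\<integral>z. F z \<partial>PiM I M)" unfolding F_def by (rule ins[OF fm fb])
  have e2: "(\<integral>x. g x \<partial>PiM J M) = (\<integral>z. G z \<partial>PiM I M)" unfolding G_def by (rule ins[OF gm gb])
  have e3: "(\<integral>x. f x * g x \<partial>PiM J M) = (\<integral>z. H z \<partial>PiM I M)" unfolding H_def by (rule ins[OF fgm fgb])
  show ?case unfolding J_def[symmetric] e1 e2 e3 using IH le by linarith
qed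

abbreviation "SND \<equiv> density lborel (\<lambda>x. ennreal (std_normal_density x))"

lemma SND_rd: "real_distribution SND"
  by (rule real_dist_normal_dist)

lemma Phi_cdf: "Phi = cdf SND" by (simp add: Phi_def)

lemma SND_point: "measure SND {t} = 0"
proof -
  have "{t} \<in> null_sets SND"
  proof (subst null_sets_density_iff)
    have "AE x in lborel. x \<in> {t} \<longrightarrow> std_normal_density x = 0"
      using AE_lborel_singleton[of t] by (rule AE_mp) (rule AE_I2, simp)
    then show "{t} \<in> sets lborel \<and> (AE x in lborel. x \<in> {t} \<longrightarrow> ennreal (std_normal_density x) = 0)"
      by auto
  qed simp
  then have "emeasure SND {t} = 0" by blast
  then show ?thesis by (simp add: measure_def)
qed

lemma Phi_cont: "isCont Phi x"
  unfolding Phi_cdf using finite_borel_measure.isCont_cdf[OF real_distribution.finite_borel_measure_M[OF SND_rd]] SND_point by simp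

lemma Phi_01: "0 \<le> Phi x" "Phi x \<le> 1"
  unfolding Phi_cdf using real_distribution.cdf_bounded_prob[OF SND_rd]
    finite_borel_measure.cdf_nonneg[OF real_distribution.finite_borel_measure_M[OF SND_rd]] by auto

lemma prob_space_emeasure_eq_measure: "prob_space M \<Longrightarrow> emeasure M A = ennreal (measure M A)"
  by (rule finite_measure.emeasure_eq_measure) (simp add: prob_space_def)

lemma Phi_strict: assumes "x < y" shows "Phi x < Phi y"
proof -
  have eq: "Phi y - Phi x = measure SND {x<..y}"
    unfolding Phi_cdf using finite_borel_measure.cdf_diff_eq[OF real_distribution.finite_borel_measure_M[OF SND_rd] assms] .
  have "{x<..y} \<notin> null_sets SND"
  proof
    assume "{x<..y} \<in> null_sets SND"
    then have "AE z in lborel. z \<in> {x<..y} \<longrightarrow> std_normal_density z = 0"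
      by (subst (asm) null_sets_density_iff) auto
    then have "AE z in lborel. z \<notin> {x<..y}"
      by (rule AE_mp) (auto intro!: AE_I2 simp: normal_density_def)
    then have "{x<..y} \<in> null_sets lborel" by (subst AE_iff_null_sets) auto
    then show False using assms emeasure_lborel_Ioc[of x y] by (simp add: null_sets_def)
  qed
  then have "measure SND {x<..y} \<noteq> 0"
    using prob_space_emeasure_eq_measure[OF prob_space_normal_density[where \<mu>=0 and \<sigma>=1]]
    by (auto simp: null_sets_def)
  moreover have "measure SND {x<..y} \<ge> 0" by simp
  ultimately show ?thesis using eq by linarith
qed

lemma Phi_Phi_inv: assumes "0 < p" "p < 1" shows "Phi (Phi_inv p) = p"
proof -
  have "eventually (\<lambda>x. Phi x < p) at_bot"
    using finite_borel_measure.cdf_lim_at_bot[OF real_distribution.finite_borel_measure_M[OF SND_rd]] assms(1) unfolding Phi_cdf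
    by (rule order_tendstoD)
  then obtain a where a: "\<And>x. x \<le> a \<Longrightarrow> Phi x < p" by (auto simp: eventually_at_bot_linorder)
  have "eventually (\<lambda>x. Phi x > p) at_top"
    using real_distribution.cdf_lim_at_top_prob[OF SND_rd] assms(2) unfolding Phi_cdf
    by (rule order_tendstoD)
  then obtain b where b: "\<And>x. x \<ge> b \<Longrightarrow> Phi x > p" by (auto simp: eventually_at_top_linorder)
  have pa: "Phi (min a b) \<le> p" using a[of "min a b"] by simp
  have pb: "p \<le> Phi (max a b)" using b[of "max a b"] by simp
  have "\<exists>z. min a b \<le> z \<and> z \<le> max a b \<and> Phi z = p"
    by (rule IVT[where f=Phi, OF pa pb]) (simp_all add: Phi_cont)
  then obtain z where z: "Phi z = p" by blast
  have u: "w = z" if "Phi w = p" for w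
  proof (rule ccontr)
    assume "w \<noteq> z"
    then have "w < z \<or> z < w" by linarith
    then show False using Phi_strict[of w z] Phi_strict[of z w] that z by linarith
  qed
  have "(THE w. Phi w = p) = z" by (rule the_equality) (use z u in blast)+
  then show ?thesis unfolding Phi_inv_def using z by simp
qed

lemma SND_null: "{t} \<in> null_sets SND"
proof -
  have "measure SND {t} = 0" by (rule SND_point)
  then have "emeasure SND {t} = 0"
    using prob_space_emeasure_eq_measure[OF prob_space_normal_density[where \<mu>=0 and \<sigma>=1]] by simp
  then show ?thesis by auto
qed

lemma Phi_less: "measure SND {..<t} = Phi t"
proof -
  have "Phi t = measure SND ({..<t} \<union> {t})"
    unfolding Phi_cdf cdf_def by (rule arg_cong[where f="measure SND"]) auto
  also have "\<dots> = measure SND {..<t}" by (rule measure_Un_null_set[OF _ SND_null]) simp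
  finally show ?thesis by simp
qed

lemma prob_less_normal:
  assumes M: "prob_space M" and X: "distributed M lborel X (\<lambda>z. ennreal (normal_density \<mu> s z))" and s: "s > 0"
  shows "measure M {\<omega> \<in> space M. X \<omega> < h} = Phi ((h - \<mu>) / s)"
proof -
  interpret prob_space M by (rule M)
  define Z where "Z = (\<lambda>\<omega>. (X \<omega> - \<mu>) / s)"
  have Zd: "distributed M lborel Z std_normal_density"
    using normal_standard_normal_convert[OF s, of X \<mu>] X unfolding Z_def by simp
  have Zm: "Z \<in> measurable M lborel" using distributed_measurable[OF Zd] .
  have "{\<omega> \<in> space M. X \<omega> < h} = Z -` {..<(h - \<mu>) / s} \<inter> space M"
    using s by (auto simp: Z_def divide_strict_right_mono field_simps)
  then have "measure M {\<omega> \<in> space M. X \<omega> < h} = measure (distr M lborel Z) {..<(h - \<mu>) / s}"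
    using measure_distr[OF Zm, of "{..<(h - \<mu>) / s}"] by simp
  also have "\<dots> = measure SND {..<(h - \<mu>) / s}"
    using distributed_distr_eq_density[OF Zd] by simp
  finally show ?thesis using Phi_less by simp
qed

lemma window_normal:
  fixes x :: "nat \<Rightarrow> 'a \<Rightarrow> real" and mu :: "nat \<Rightarrow> real"
  assumes M: "prob_space M" and indep: "prob_space.indep_vars M (\<lambda>_. borel) x {1..}"
    and dist: "\<And>n. n \<ge> 1 \<Longrightarrow> distributed M lborel (x n) (\<lambda>z. ennreal (normal_density (mu n) \<sigma> z))"
    and \<sigma>: "\<sigma> > 0" and \<alpha>: "\<alpha> \<noteq> 0" and m: "m \<ge> 1" and n: "n \<ge> m"
    and same: "\<And>i. i \<in> {n-m+1..n} \<Longrightarrow> mu i = \<mu>"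
  shows "distributed M lborel (\<lambda>\<omega>. \<Sum>i\<in>{n-m+1..n}. \<beta> + \<alpha> * x i \<omega>)
          (\<lambda>z. ennreal (normal_density (real m * (\<beta> + \<alpha> * \<mu>)) (sqrt (real m * (\<alpha>\<^sup>2 * \<sigma>\<^sup>2))) z))"
proof -
  interpret prob_space M by (rule M)
  define W where "W = {n-m+1..n}"
  have W1: "W \<subseteq> {1..}" using m n by (auto simp: W_def)
  have cW: "card W = m" using m n by (simp add: W_def)
  have fW: "finite W" "W \<noteq> {}" using m n by (auto simp: W_def)
  have ind: "indep_vars (\<lambda>_. borel) (\<lambda>i \<omega>. \<beta> + \<alpha> * x i \<omega>) W"
    by (rule indep_vars_subset[OF indep_vars_compose2[OF indep, where Y="\<lambda>i v. \<beta> + \<alpha> * v" and N="\<lambda>_. borel"] W1]) simp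
  have d: "distributed M lborel (\<lambda>\<omega>. \<beta> + \<alpha> * x i \<omega>) (\<lambda>z. ennreal (normal_density (\<beta> + \<alpha> * \<mu>) (\<bar>\<alpha>\<bar> * \<sigma>) z))"
    if "i \<in> W" for i
  proof -
    have "i \<ge> 1" using W1 that by auto
    then show ?thesis using normal_density_affine[OF dist[of i] \<sigma> \<alpha>, of \<beta>] same[of i] that
      by (simp add: W_def)
  qed
  have D: "distributed M lborel (\<lambda>\<omega>. \<Sum>i\<in>W. \<beta> + \<alpha> * x i \<omega>)
      (normal_density (\<Sum>i\<in>W. \<beta> + \<alpha> * \<mu>) (sqrt (\<Sum>i\<in>W. (\<bar>\<alpha>\<bar> * \<sigma>)\<^sup>2)))"
    by (rule sum_indep_normal[OF fW ind]) (use \<sigma> \<alpha> d in auto)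
  have e1: "(\<Sum>i\<in>W. (\<bar>\<alpha>\<bar> * \<sigma>)\<^sup>2) = real m * (\<alpha>\<^sup>2 * \<sigma>\<^sup>2)" using cW by (simp add: power_mult_distrib)
  have e2: "(\<Sum>i\<in>W. \<beta> + \<alpha> * \<mu>) = real m * (\<beta> + \<alpha> * \<mu>)" using cW by simp
  show ?thesis using D[unfolded e1 e2] unfolding W_def .
qed

lemma harris_ev:
  fixes x :: "nat \<Rightarrow> 'a \<Rightarrow> real" and R :: "real \<Rightarrow> real \<Rightarrow> bool"
  assumes P: "prob_space P" and I: "finite I" "I \<noteq> {}"
    and indep: "prob_space.indep_vars P (\<lambda>_. borel) x I"
    and xm: "\<And>i. i \<in> I \<Longrightarrow> x i \<in> borel_measurable P"
    and Rt: "\<And>a b. R a b \<or> R b a"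
    and C: "C \<in> sets (PiM I (\<lambda>_. borel))" and D: "D \<in> sets (PiM I (\<lambda>_. borel))"
    and Cmon: "\<And>z z'. z \<in> space (PiM I (\<lambda>_. borel)) \<Longrightarrow> z' \<in> space (PiM I (\<lambda>_. borel)) \<Longrightarrow>
        \<forall>i\<in>I. R (z i) (z' i) \<Longrightarrow> z' \<in> C \<Longrightarrow> z \<in> C"
    and Dmon: "\<And>z z'. z \<in> space (PiM I (\<lambda>_. borel)) \<Longrightarrow> z' \<in> space (PiM I (\<lambda>_. borel)) \<Longrightarrow>
        \<forall>i\<in>I. R (z i) (z' i) \<Longrightarrow> z' \<in> D \<Longrightarrow> z \<in> D"
  shows "measure P {\<omega> \<in> space P. (\<lambda>i\<in>I. x i \<omega>) \<in> C} * measure P {\<omega> \<in> space P. (\<lambda>i\<in>I. x i \<omega>) \<in> D}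
       \<le> measure P {\<omega> \<in> space P. (\<lambda>i\<in>I. x i \<omega>) \<in> C \<inter> D}"
proof -
  interpret prob_space P by (rule P)
  define Y where "Y = (\<lambda>\<omega>. \<lambda>i\<in>I. x i \<omega>)"
  define M' where "M' i = (if i \<in> I then distr P borel (x i) else return borel 0)" for i
  have M'p: "prob_space (M' i)" for i
    by (auto simp: M'_def intro: prob_space_distr xm prob_space_return)
  have Ym: "Y \<in> measurable P (PiM I (\<lambda>_. borel))"
    unfolding Y_def by (rule measurable_restrict) (use xm in auto)
  have "distr P (PiM I (\<lambda>_. borel)) Y = PiM I (\<lambda>i. distr P borel (x i))"
    using indep_vars_iff_distr_eq_PiM'[OF I(2), where M'="\<lambda>_. borel" and X=x] indep xm unfolding Y_def by simp
  also have "\<dots> = PiM I M'" by (rule PiM_cong) (simp_all add: M'_def)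
  finally have dY: "distr P (PiM I (\<lambda>_. borel)) Y = PiM I M'" .
  have sQ: "sets (PiM I M') = sets (PiM I (\<lambda>_. borel))"
    by (rule sets_PiM_cong) (simp_all add: M'_def)
  have spQ: "space (PiM I M') = space (PiM I (\<lambda>_. borel))"
    by (rule sets_eq_imp_space_eq[OF sQ])
  have meq: "measure P {\<omega> \<in> space P. Y \<omega> \<in> A} = measure (PiM I M') A" if "A \<in> sets (PiM I (\<lambda>_. borel))" for A
  proof -
    have "measure (PiM I M') A = measure P (Y -` A \<inter> space P)"
      unfolding dY[symmetric] by (rule measure_distr[OF Ym that])
    then show ?thesis by (simp add: vimage_def Int_def conj_commute)
  qed
  have PQ: "prob_space (PiM I M')" by (rule prob_space_PiM) (rule M'p)
  have indm: "(indicator A :: _ \<Rightarrow> real) \<in> borel_measurable (PiM I M')" if "A \<in> sets (PiM I (\<lambda>_. borel))" for A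
    using that sQ by (intro borel_measurable_indicator) simp
  have intI: "(\<integral>z. (indicator A z :: real) \<partial>PiM I M') = measure (PiM I M') A" if "A \<in> sets (PiM I (\<lambda>_. borel))" for A
    using that sQ sets.sets_into_space[of A "PiM I M'"] by (simp add: Int_absorb2)
  have H: "(\<integral>z. indicator C z \<partial>PiM I M') * (\<integral>z. indicator D z \<partial>PiM I M')
      \<le> (\<integral>z. (indicator C z * indicator D z :: real) \<partial>PiM I M')"
  proof (rule harris[OF I(1) M'p Rt indm[OF C] indm[OF D]])
    fix z z' assume z: "z \<in> space (PiM I M')" and z': "z' \<in> space (PiM I M')" and r: "\<forall>i\<in>I. R (z i) (z' i)"
    show "(indicator C z' :: real) \<le> indicator C z"
      using Cmon[OF z[unfolded spQ] z'[unfolded spQ] r] by (auto simp: indicator_def)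
    show "(indicator D z' :: real) \<le> indicator D z"
      using Dmon[OF z[unfolded spQ] z'[unfolded spQ] r] by (auto simp: indicator_def)
  qed (auto simp: indicator_def)
  have CD: "C \<inter> D \<in> sets (PiM I (\<lambda>_. borel))" using C D by auto
  have "(\<lambda>z. indicator C z * indicator D z :: real) = indicator (C \<inter> D)"
    by (auto simp: indicator_def fun_eq_iff)
  then have "measure (PiM I M') C * measure (PiM I M') D \<le> measure (PiM I M') (C \<inter> D)"
    using H intI[OF C] intI[OF D] intI[OF CD] by simp
  then show ?thesis using meq[OF C] meq[OF D] meq[OF CD] unfolding Y_def by simp
qed

lemma harris_prod:
  fixes x :: "nat \<Rightarrow> 'a \<Rightarrow> real" and R :: "real \<Rightarrow> real \<Rightarrow> bool" and C :: "nat \<Rightarrow> (nat \<Rightarrow> real) set"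
  assumes P: "prob_space P" and I: "finite I" "I \<noteq> {}"
    and indep: "prob_space.indep_vars P (\<lambda>_. borel) x I"
    and xm: "\<And>i. i \<in> I \<Longrightarrow> x i \<in> borel_measurable P"
    and Rt: "\<And>a b. R a b \<or> R b a"
    and N: "finite N"
    and C: "\<And>n. n \<in> N \<Longrightarrow> C n \<in> sets (PiM I (\<lambda>_. borel))"
    and Cmon: "\<And>n z z'. n \<in> N \<Longrightarrow> z \<in> space (PiM I (\<lambda>_. borel)) \<Longrightarrow> z' \<in> space (PiM I (\<lambda>_. borel)) \<Longrightarrow>
        \<forall>i\<in>I. R (z i) (z' i) \<Longrightarrow> z' \<in> C n \<Longrightarrow> z \<in> C n"
  shows "(\<Prod>n\<in>N. measure P {\<omega> \<in> space P. (\<lambda>i\<in>I. x i \<omega>) \<in> C n})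
       \<le> measure P {\<omega> \<in> space P. (\<lambda>i\<in>I. x i \<omega>) \<in> space (PiM I (\<lambda>_. borel)) \<inter> (\<Inter>n\<in>N. C n)}"
  using N C Cmon
proof (induction N rule: finite_induct)
  case empty
  interpret prob_space P by (rule P)
  have "{\<omega> \<in> space P. (\<lambda>i\<in>I. x i \<omega>) \<in> space (PiM I (\<lambda>_. borel)) \<inter> (\<Inter>n\<in>{}. C n)} = space P"
    by (auto simp: space_PiM)
  then show ?case by (simp only: prod.empty prob_space)
next
  case (insert k N)
  interpret prob_space P by (rule P)
  define D where "D = space (PiM I (\<lambda>_. borel)) \<inter> (\<Inter>n\<in>N. C n)"
  have D: "D \<in> sets (PiM I (\<lambda>_. borel))"
  proof (cases "N = {}")
    case True then show ?thesis by (simp add: D_def)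
  next
    case False
    then have "D = (\<Inter>n\<in>N. C n)" using insert.prems(1) sets.sets_into_space by (auto simp: D_def)
    then show ?thesis using False insert.prems(1) insert.hyps(1) by (auto intro!: sets.finite_INT)
  qed
  have IH: "(\<Prod>n\<in>N. measure P {\<omega> \<in> space P. (\<lambda>i\<in>I. x i \<omega>) \<in> C n})
       \<le> measure P {\<omega> \<in> space P. (\<lambda>i\<in>I. x i \<omega>) \<in> D}"
    unfolding D_def by (rule insert.IH) (use insert.prems in auto)
  have hk: "measure P {\<omega> \<in> space P. (\<lambda>i\<in>I. x i \<omega>) \<in> C k} * measure P {\<omega> \<in> space P. (\<lambda>i\<in>I. x i \<omega>) \<in> D}
       \<le> measure P {\<omega> \<in> space P. (\<lambda>i\<in>I. x i \<omega>) \<in> C k \<inter> D}"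
  proof (rule harris_ev[OF P I indep xm Rt insert.prems(1)[of k] D])
    fix z z' assume "z \<in> space (PiM I (\<lambda>_. borel))" "z' \<in> space (PiM I (\<lambda>_. borel))" "\<forall>i\<in>I. R (z i) (z' i)"
    then show "z' \<in> C k \<Longrightarrow> z \<in> C k" "z' \<in> D \<Longrightarrow> z \<in> D"
      using insert.prems(2) by (auto simp: D_def)
  qed auto
  have E: "C k \<inter> D = space (PiM I (\<lambda>_. borel)) \<inter> (\<Inter>n\<in>insert k N. C n)" by (auto simp: D_def)
  have pe: "(\<Prod>n\<in>insert k N. measure P {\<omega> \<in> space P. (\<lambda>i\<in>I. x i \<omega>) \<in> C n})
      = measure P {\<omega> \<in> space P. (\<lambda>i\<in>I. x i \<omega>) \<in> C k} * (\<Prod>n\<in>N. measure P {\<omega> \<in> space P. (\<lambda>i\<in>I. x i \<omega>) \<in> C n})"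
    using insert.hyps by simp
  have mo: "measure P {\<omega> \<in> space P. (\<lambda>i\<in>I. x i \<omega>) \<in> C k} * (\<Prod>n\<in>N. measure P {\<omega> \<in> space P. (\<lambda>i\<in>I. x i \<omega>) \<in> C n})
      \<le> measure P {\<omega> \<in> space P. (\<lambda>i\<in>I. x i \<omega>) \<in> C k} * measure P {\<omega> \<in> space P. (\<lambda>i\<in>I. x i \<omega>) \<in> D}"
    by (rule mult_left_mono[OF IH]) simp
  have "(\<Prod>n\<in>insert k N. measure P {\<omega> \<in> space P. (\<lambda>i\<in>I. x i \<omega>) \<in> C n})
     \<le> measure P {\<omega> \<in> space P. (\<lambda>i\<in>I. x i \<omega>) \<in> C k \<inter> D}"
    using pe mo hk by linarith
  then show ?case unfolding E .
qed

lemma TFC_ge: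
  "enat v \<le> T_FC m h ys \<longleftrightarrow> (\<forall>n. m \<le> n \<and> n < v \<longrightarrow> (\<Sum>i\<in>{n-m+1..n}. ys i) < h)"
proof (cases "\<exists>n\<ge>m. (\<Sum>i\<in>{n-m+1..n}. ys i) \<ge> h")
  case True
  define L where "L = (LEAST n. n \<ge> m \<and> (\<Sum>i\<in>{n-m+1..n}. ys i) \<ge> h)"
  have T: "T_FC m h ys = enat L" using True by (simp add: T_FC_def L_def)
  have L: "L \<ge> m \<and> (\<Sum>i\<in>{L-m+1..L}. ys i) \<ge> h"
    unfolding L_def using True by (metis (mono_tags, lifting) LeastI)
  have Lle: "L \<le> n" if "n \<ge> m" "(\<Sum>i\<in>{n-m+1..n}. ys i) \<ge> h" for n
    unfolding L_def using that by (simp add: Least_le)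
  show ?thesis
  proof
    assume "enat v \<le> T_FC m h ys"
    then have "v \<le> L" using T by simp
    then show "\<forall>n. m \<le> n \<and> n < v \<longrightarrow> (\<Sum>i\<in>{n-m+1..n}. ys i) < h"
      using Lle by (meson leD le_less_trans not_le_imp_less)
  next
    assume "\<forall>n. m \<le> n \<and> n < v \<longrightarrow> (\<Sum>i\<in>{n-m+1..n}. ys i) < h"
    then have "\<not> L < v" using L by (meson not_le)
    then show "enat v \<le> T_FC m h ys" using T by simp
  qed
next
  case False
  then have "T_FC m h ys = \<infinity>" by (simp add: T_FC_def)
  moreover have "\<forall>n. m \<le> n \<and> n < v \<longrightarrow> (\<Sum>i\<in>{n-m+1..n}. ys i) < h"
    using False by (meson not_le)
  ultimately show ?thesis by simp
qed

lemma TFC_window: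
  assumes "enat l \<le> T_FC m h ys" "T_FC m h ys < enat k"
  shows "\<exists>n. l \<le> n \<and> n < k \<and> m \<le> n \<and> h \<le> (\<Sum>i\<in>{n-m+1..n}. ys i)"
proof (cases "\<exists>n\<ge>m. (\<Sum>i\<in>{n-m+1..n}. ys i) \<ge> h")
  case True
  define L where "L = (LEAST n. n \<ge> m \<and> (\<Sum>i\<in>{n-m+1..n}. ys i) \<ge> h)"
  have T: "T_FC m h ys = enat L" using True by (simp add: T_FC_def L_def)
  have L: "L \<ge> m \<and> (\<Sum>i\<in>{L-m+1..L}. ys i) \<ge> h"
    unfolding L_def using True by (metis (mono_tags, lifting) LeastI)
  show ?thesis using assms T L by (intro exI[of _ L]) auto
next
  case False
  then have "T_FC m h ys = \<infinity>" by (simp add: T_FC_def)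
  then show ?thesis using assms by simp
qed

lemma restrict_space_PiM: "(\<lambda>i\<in>I. f i) \<in> space (PiM I (\<lambda>_. borel :: real measure))"
  by (simp add: space_PiM)

lemma sum_PiM_meas:
  fixes a b :: real
  assumes "W \<subseteq> I"
  shows "(\<lambda>z. \<Sum>i\<in>W. b + a * z i) \<in> borel_measurable (PiM I (\<lambda>_. borel :: real measure))"
proof (rule borel_measurable_sum)
  fix i assume "i \<in> W"
  then have "i \<in> I" using assms by auto
  then have "(\<lambda>z. z i) \<in> borel_measurable (PiM I (\<lambda>_. borel :: real measure))" by simp
  then show "(\<lambda>z. b + a * z i) \<in> borel_measurable (PiM I (\<lambda>_. borel :: real measure))" by measurable
qed

theorem corollary2:
  fixes P :: "enat \<Rightarrow> 'a measure" and x :: "nat \<Rightarrow> 'a \<Rightarrow> real"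
    and m m\<^sub>\<alpha> :: nat and \<mu>0 \<mu>1 \<mu>1t \<sigma> h \<alpha> :: real
  assumes m: "m \<ge> 1" and m\<alpha>: "m\<^sub>\<alpha> \<ge> 1"
    and \<sigma>: "\<sigma> > 0" and tuned: "\<mu>1t \<noteq> \<mu>0"
    and prob: "\<And>v. v \<noteq> 0 \<Longrightarrow> prob_space (P v)"
    and indep: "\<And>v. v \<noteq> 0 \<Longrightarrow> prob_space.indep_vars (P v) (\<lambda>_. borel) x {1..}"
    and distr: "\<And>v n. v \<noteq> 0 \<Longrightarrow> n \<ge> 1 \<Longrightarrow>
                  distributed (P v) lborel (x n) (\<lambda>z. ennreal (normal_density (obs_mean \<mu>0 \<mu>1 m v n) \<sigma> z))"
  defines "\<mu>y0 \<equiv> - ((\<mu>1t - \<mu>0)\<^sup>2 / (2 * \<sigma>\<^sup>2))"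
    and "\<mu>y1 \<equiv> (\<mu>1t - \<mu>0) / \<sigma>\<^sup>2 * (\<mu>1 - (\<mu>1t + \<mu>0) / 2)"
    and "\<sigma>y2 \<equiv> - 2 * (- ((\<mu>1t - \<mu>0)\<^sup>2 / (2 * \<sigma>\<^sup>2)))"
    and "T \<equiv> (\<lambda>hc \<omega>. T_FC m hc (\<lambda>i. LLRc \<mu>0 \<mu>1t \<sigma> (x i \<omega>)))"
  shows "P_md P (T h) m \<le> Phi ((h - real m * \<mu>y1) / sqrt (real m * \<sigma>y2))
       \<and> P_fa (P \<infinity>) (T h) m\<^sub>\<alpha> \<le> 1 - (Phi ((h - real m * \<mu>y0) / sqrt (real m * \<sigma>y2))) ^ m\<^sub>\<alpha>
       \<and> (0 < \<alpha> \<and> \<alpha> < 1 \<longrightarrow>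
            P_fa (P \<infinity>) (T (sqrt (real m * \<sigma>y2) * Phi_inv ((1 - \<alpha>) powr (1 / real m\<^sub>\<alpha>)) + real m * \<mu>y0)) m\<^sub>\<alpha> \<le> \<alpha>)"
proof -
  define a where "a = (\<mu>1t - \<mu>0) / \<sigma>\<^sup>2"
  define b where "b = - a * ((\<mu>1t + \<mu>0) / 2)"
  have a0: "a \<noteq> 0" using tuned \<sigma> by (simp add: a_def)
  have Laff: "LLRc \<mu>0 \<mu>1t \<sigma> z = b + a * z" for z
    using \<sigma> by (simp add: LLRc_def a_def b_def field_simps)
  have d0: "\<mu>y0 = b + a * \<mu>0" using assms(8) \<sigma>
    by (simp add: a_def b_def field_simps power2_eq_square)
  have d1: "\<mu>y1 = b + a * \<mu>1" using assms(9) \<sigma>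
    by (simp add: a_def b_def field_simps power2_eq_square)
  have ds: "\<sigma>y2 = a\<^sup>2 * \<sigma>\<^sup>2" using assms(10) \<sigma>
    by (simp add: a_def field_simps power2_eq_square)
  have dT: "T hc \<omega> = T_FC m hc (\<lambda>i. b + a * x i \<omega>)" for hc \<omega>
    using assms(11) by (simp add: Laff)
  define S where "S n \<omega> = (\<Sum>i\<in>{n-m+1..n}. b + a * x i \<omega>)" for n \<omega>
  have TS: "enat v \<le> T hc \<omega> \<longleftrightarrow> (\<forall>n. m \<le> n \<and> n < v \<longrightarrow> S n \<omega> < hc)" for v hc \<omega>
    unfolding dT S_def by (rule TFC_ge)
  have TW: "\<exists>n. l \<le> n \<and> n < k \<and> m \<le> n \<and> hc \<le> S n \<omega>" if "enat l \<le> T hc \<omega>" "T hc \<omega> < enat k" for l k hc \<omega>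
    using TFC_window[OF that[unfolded dT]] unfolding S_def .
  have sqp: "sqrt (real m * \<sigma>y2) > 0" using m a0 \<sigma> by (simp add: ds)
  have xm: "x i \<in> borel_measurable (P v)" if "v \<noteq> 0" "i \<ge> 1" for v i
    using distributed_measurable[OF distr[OF that]] by simp
  have Sm: "S n \<in> borel_measurable (P v)" if "v \<noteq> 0" "n \<ge> m" for v n
    unfolding S_def
  proof (rule borel_measurable_sum)
    fix i assume "i \<in> {n-m+1..n}"
    then have "i \<ge> 1" by auto
    then show "(\<lambda>\<omega>. b + a * x i \<omega>) \<in> borel_measurable (P v)" using xm[OF that(1)] by measurable
  qed
  have Sprob: "measure (P v) {\<omega> \<in> space (P v). S n \<omega> < hc} = Phi ((hc - real m * (b + a * \<mu>)) / sqrt (real m * \<sigma>y2))"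
    if "v \<noteq> 0" "n \<ge> m" "\<And>i. i \<in> {n-m+1..n} \<Longrightarrow> obs_mean \<mu>0 \<mu>1 m v i = \<mu>" for v n hc \<mu>
  proof -
    have "distributed (P v) lborel (S n)
          (\<lambda>z. ennreal (normal_density (real m * (b + a * \<mu>)) (sqrt (real m * (a\<^sup>2 * \<sigma>\<^sup>2))) z))"
      unfolding S_def
      by (rule window_normal[OF prob[OF that(1)] indep[OF that(1)] distr[OF that(1)] \<sigma> a0 m that(2) that(3)])
    then show ?thesis using prob_less_normal[OF prob[OF that(1)], of "S n"] sqp unfolding ds by simp
  qed
  have Phi0: "0 \<le> Phi t" "Phi t \<le> 1" for t using Phi_01 by auto
  have md: "P_md P (T h) m \<le> Phi ((h - real m * \<mu>y1) / sqrt (real m * \<sigma>y2))"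
    unfolding P_md_def
  proof (rule cSUP_least)
    show "{1::nat..} \<noteq> {}" by auto
    fix v :: nat assume "v \<in> {1..}"
    then have v1: "v \<ge> 1" by simp
    have v0: "enat v \<noteq> 0" using v1 by (simp add: zero_enat_def)
    interpret Pv: prob_space "P (enat v)" by (rule prob[OF v0])
    define n0 where "n0 = v + m - 1"
    have n0m: "n0 \<ge> m" "n0 - m + 1 = v" "n0 < v + m" using v1 m by (auto simp: n0_def)
    define A where "A = {v..n0}"
    define B where "B = {1..<v}"
    define Aset where "Aset = {\<omega> \<in> space (P (enat v)). S n0 \<omega> < h}"
    define Bset where "Bset = {\<omega> \<in> space (P (enat v)). \<forall>n\<in>{m..<v}. S n \<omega> < h}"
    define CA where "CA = {z \<in> space (PiM A (\<lambda>_. borel :: real measure)). (\<Sum>i\<in>A. b + a * z i) < h}"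
    define CB where "CB = {z \<in> space (PiM B (\<lambda>_. borel :: real measure)).
                            \<forall>n\<in>{m..<v}. (\<Sum>i\<in>{n-m+1..n}. b + a * z i) < h}"
    have AB: "A \<inter> B = {}" "A \<subseteq> {1..}" "B \<subseteq> {1..}" using v1 by (auto simp: A_def B_def)
    have ind: "Pv.indep_var (PiM A (\<lambda>_. borel)) (\<lambda>\<omega>. \<lambda>i\<in>A. x i \<omega>) (PiM B (\<lambda>_. borel)) (\<lambda>\<omega>. \<lambda>i\<in>B. x i \<omega>)"
      by (rule Pv.indep_var_restrict[OF indep[OF v0] AB])
    have CAs: "CA \<in> sets (PiM A (\<lambda>_. borel))"
      unfolding CA_def by (rule borel_measurable_less[OF sum_PiM_meas]) auto
    have CBs: "CB \<in> sets (PiM B (\<lambda>_. borel))"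
      unfolding CB_def
    proof (rule sets.sets_Collect_finite_All)
      fix n assume "n \<in> {m..<v}"
      then have "{n-m+1..n} \<subseteq> B" using m by (auto simp: B_def)
      then show "{z \<in> space (PiM B (\<lambda>_. borel :: real measure)). (\<Sum>i\<in>{n-m+1..n}. b + a * z i) < h} \<in> sets (PiM B (\<lambda>_. borel))"
        by (rule borel_measurable_less[OF sum_PiM_meas]) auto
    qed simp
    have eqA: "(\<lambda>\<omega>. \<lambda>i\<in>A. x i \<omega>) -` CA \<inter> space (P (enat v)) = Aset"
    proof -
      have "(\<Sum>i\<in>A. b + a * (\<lambda>i\<in>A. x i \<omega>) i) = S n0 \<omega>" for \<omega>
        unfolding S_def n0m(2) A_def by (rule sum.cong) auto
      then show ?thesis unfolding CA_def Aset_def by (auto simp: restrict_space_PiM)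
    qed
    have eqB: "(\<lambda>\<omega>. \<lambda>i\<in>B. x i \<omega>) -` CB \<inter> space (P (enat v)) = Bset"
    proof -
      have "(\<Sum>i\<in>{n-m+1..n}. b + a * (\<lambda>i\<in>B. x i \<omega>) i) = S n \<omega>" if "n \<in> {m..<v}" for \<omega> n
        unfolding S_def by (rule sum.cong) (use that m in \<open>auto simp: B_def\<close>)
      then show ?thesis unfolding CB_def Bset_def by (auto simp: restrict_space_PiM)
    qed
    have eqAB: "(\<lambda>\<omega>. ((\<lambda>i\<in>A. x i \<omega>), (\<lambda>i\<in>B. x i \<omega>))) -` (CA \<times> CB) \<inter> space (P (enat v)) = Aset \<inter> Bset"
      using eqA eqB by auto
    have indAB: "measure (P (enat v)) (Aset \<inter> Bset) = measure (P (enat v)) Aset * measure (P (enat v)) Bset"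
      using Pv.indep_varD[OF ind CAs CBs] unfolding eqA eqB eqAB .
    have Asets: "Aset \<in> sets (P (enat v))"
      unfolding Aset_def by (rule borel_measurable_less[OF Sm[OF v0 n0m(1)]]) simp
    have Bsets: "Bset \<in> sets (P (enat v))"
      unfolding Bset_def
    proof (rule sets.sets_Collect_finite_All)
      fix n assume "n \<in> {m..<v}"
      then show "{\<omega> \<in> space (P (enat v)). S n \<omega> < h} \<in> sets (P (enat v))"
        by (intro borel_measurable_less[OF Sm[OF v0]]) auto
    qed simp
    have Bset_eq: "{\<omega> \<in> space (P (enat v)). T h \<omega> \<ge> enat v} = Bset"
      unfolding Bset_def TS by auto
    have sub: "{\<omega> \<in> space (P (enat v)). T h \<omega> \<ge> enat (v + m)} \<inter> Bset \<subseteq> Aset \<inter> Bset"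
      unfolding Aset_def using n0m by (auto simp: TS)
    have num: "measure (P (enat v)) ({\<omega> \<in> space (P (enat v)). T h \<omega> \<ge> enat (v + m)} \<inter> Bset)
        \<le> measure (P (enat v)) Aset * measure (P (enat v)) Bset"
      using Pv.finite_measure_mono[OF sub] Asets Bsets indAB by auto
    have PA: "measure (P (enat v)) Aset = Phi ((h - real m * \<mu>y1) / sqrt (real m * \<sigma>y2))"
      unfolding Aset_def d1
    proof (rule Sprob[OF v0 n0m(1)])
      fix i assume "i \<in> {n0-m+1..n0}"
      then have "v \<le> i" "i < v + m" using n0m by auto
      then show "obs_mean \<mu>0 \<mu>1 m (enat v) i = \<mu>1" by (simp add: obs_mean_def)
    qed
    show "cprob (P (enat v)) {\<omega> \<in> space (P (enat v)). T h \<omega> \<ge> enat (v + m)}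
          {\<omega> \<in> space (P (enat v)). T h \<omega> \<ge> enat v} \<le> Phi ((h - real m * \<mu>y1) / sqrt (real m * \<sigma>y2))"
      unfolding cprob_def Bset_eq
    proof (cases "measure (P (enat v)) Bset = 0")
      case True then show "measure (P (enat v)) ({\<omega> \<in> space (P (enat v)). T h \<omega> \<ge> enat (v + m)} \<inter> Bset) / measure (P (enat v)) Bset
          \<le> Phi ((h - real m * \<mu>y1) / sqrt (real m * \<sigma>y2))" using Phi0 by simp
    next
      case False
      then have pos: "measure (P (enat v)) Bset > 0" using measure_nonneg[of "P (enat v)" Bset] by linarith
      show "measure (P (enat v)) ({\<omega> \<in> space (P (enat v)). T h \<omega> \<ge> enat (v + m)} \<inter> Bset) / measure (P (enat v)) Bset
          \<le> Phi ((h - real m * \<mu>y1) / sqrt (real m * \<sigma>y2))"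
        using num pos PA by (simp add: divide_le_eq)
    qed
  qed
  have fa: "P_fa (P \<infinity>) (T hc) m\<^sub>\<alpha> \<le> 1 - (Phi ((hc - real m * \<mu>y0) / sqrt (real m * \<sigma>y2))) ^ m\<^sub>\<alpha>" for hc
    unfolding P_fa_def
  proof (rule cSUP_least)
    show "{1::nat..} \<noteq> {}" by auto
    fix l :: nat assume "l \<in> {1..}"
    then have l1: "l \<ge> 1" by simp
    have i0: "(\<infinity>::enat) \<noteq> 0" by simp
    interpret Pi: prob_space "P \<infinity>" by (rule prob[OF i0])
    define \<Phi>0 where "\<Phi>0 = Phi ((hc - real m * \<mu>y0) / sqrt (real m * \<sigma>y2))"
    define N where "N = {n. l \<le> n \<and> n < l + m\<^sub>\<alpha> \<and> m \<le> n}"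
    define I where "I = {1..l + m\<^sub>\<alpha>}"
    define C where "C n = {z \<in> space (PiM I (\<lambda>_. borel :: real measure)). (\<Sum>i\<in>{n-m+1..n}. b + a * z i) < hc}" for n
    define Aall where "Aall = {\<omega> \<in> space (P \<infinity>). \<forall>n\<in>N. S n \<omega> < hc}"
    have Nf: "finite N" by (rule finite_subset[of _ "{..<l + m\<^sub>\<alpha>}"]) (auto simp: N_def)
    have cN: "card N \<le> m\<^sub>\<alpha>"
    proof -
      have "N \<subseteq> {l..<l + m\<^sub>\<alpha>}" by (auto simp: N_def)
      then show ?thesis using card_mono[of "{l..<l + m\<^sub>\<alpha>}" N] by simp
    qed
    have WI: "{n-m+1..n} \<subseteq> I" if "n \<in> N" for n using that m by (auto simp: N_def I_def)
    have If: "finite I" "I \<noteq> {}" using l1 by (auto simp: I_def)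
    have indI: "Pi.indep_vars (\<lambda>_. borel) x I"
      by (rule Pi.indep_vars_subset[OF indep[OF i0]]) (auto simp: I_def)
    have xmI: "x i \<in> borel_measurable (P \<infinity>)" if "i \<in> I" for i using that xm[OF i0] by (auto simp: I_def)
    have Rt: "\<And>c d. (b + a * c \<le> b + a * d) \<or> (b + a * d \<le> b + a * c)" by linarith
    have Cs: "C n \<in> sets (PiM I (\<lambda>_. borel))" if "n \<in> N" for n
      unfolding C_def by (rule borel_measurable_less[OF sum_PiM_meas[OF WI[OF that]]]) simp
    have Cmon: "z \<in> C n" if "n \<in> N" "z \<in> space (PiM I (\<lambda>_. borel))" "z' \<in> space (PiM I (\<lambda>_. borel))"
      "\<forall>i\<in>I. b + a * z i \<le> b + a * z' i" "z' \<in> C n" for n z z'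
    proof -
      have "(\<Sum>i\<in>{n-m+1..n}. b + a * z i) \<le> (\<Sum>i\<in>{n-m+1..n}. b + a * z' i)"
        by (rule sum_mono) (use that(4) WI[OF that(1)] in auto)
      then show ?thesis using that(2,5) by (auto simp: C_def)
    qed
    have HP: "(\<Prod>n\<in>N. measure (P \<infinity>) {\<omega> \<in> space (P \<infinity>). (\<lambda>i\<in>I. x i \<omega>) \<in> C n})
       \<le> measure (P \<infinity>) {\<omega> \<in> space (P \<infinity>). (\<lambda>i\<in>I. x i \<omega>) \<in> space (PiM I (\<lambda>_. borel)) \<inter> (\<Inter>n\<in>N. C n)}"
      apply (rule harris_prod[where R="\<lambda>c d. b + a * c \<le> b + a * d", OF prob[OF i0] If indI])
          apply (erule xmI)
         apply (rule Rt)
        apply (rule Nf)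
       apply (erule Cs)
      apply (rule Cmon; assumption)
      done
    have sumeq: "(\<Sum>i\<in>{n-m+1..n}. b + a * (\<lambda>i\<in>I. x i \<omega>) i) = S n \<omega>" if "n \<in> N" for n \<omega>
      unfolding S_def by (rule sum.cong) (use WI[OF that] in auto)
    have eqC: "{\<omega> \<in> space (P \<infinity>). (\<lambda>i\<in>I. x i \<omega>) \<in> C n} = {\<omega> \<in> space (P \<infinity>). S n \<omega> < hc}" if "n \<in> N" for n
      using sumeq[OF that] by (auto simp: C_def restrict_space_PiM)
    have eqAll: "{\<omega> \<in> space (P \<infinity>). (\<lambda>i\<in>I. x i \<omega>) \<in> space (PiM I (\<lambda>_. borel)) \<inter> (\<Inter>n\<in>N. C n)} = Aall"
      using sumeq by (auto simp: C_def restrict_space_PiM Aall_def)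
    have PC: "measure (P \<infinity>) {\<omega> \<in> space (P \<infinity>). (\<lambda>i\<in>I. x i \<omega>) \<in> C n} = \<Phi>0" if "n \<in> N" for n
      unfolding eqC[OF that] \<Phi>0_def d0
      by (rule Sprob[OF i0]) (use that in \<open>auto simp: N_def obs_mean_def\<close>)
    have "\<Phi>0 ^ m\<^sub>\<alpha> \<le> \<Phi>0 ^ card N"
      by (rule power_decreasing[OF cN]) (auto simp: \<Phi>0_def Phi0)
    also have "\<Phi>0 ^ card N = (\<Prod>n\<in>N. measure (P \<infinity>) {\<omega> \<in> space (P \<infinity>). (\<lambda>i\<in>I. x i \<omega>) \<in> C n})"
      using PC by simp
    also have "\<dots> \<le> measure (P \<infinity>) Aall" using HP unfolding eqAll .
    finally have low: "\<Phi>0 ^ m\<^sub>\<alpha> \<le> measure (P \<infinity>) Aall" .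
    have Aalls: "Aall \<in> sets (P \<infinity>)"
      unfolding Aall_def
    proof (rule sets.sets_Collect_finite_All[OF _ Nf])
      fix n assume "n \<in> N"
      then show "{\<omega> \<in> space (P \<infinity>). S n \<omega> < hc} \<in> sets (P \<infinity>)"
        by (intro borel_measurable_less[OF Sm[OF i0]]) (auto simp: N_def)
    qed
    have subE: "{\<omega> \<in> space (P \<infinity>). enat l \<le> T hc \<omega> \<and> T hc \<omega> < enat (l + m\<^sub>\<alpha>)} \<subseteq> space (P \<infinity>) - Aall"
    proof
      fix \<omega> assume "\<omega> \<in> {\<omega> \<in> space (P \<infinity>). enat l \<le> T hc \<omega> \<and> T hc \<omega> < enat (l + m\<^sub>\<alpha>)}"
      then have sp: "\<omega> \<in> space (P \<infinity>)" and "enat l \<le> T hc \<omega>" "T hc \<omega> < enat (l + m\<^sub>\<alpha>)" by auto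
      then obtain n where "l \<le> n" "n < l + m\<^sub>\<alpha>" "m \<le> n" "hc \<le> S n \<omega>" using TW by blast
      then show "\<omega> \<in> space (P \<infinity>) - Aall" using sp by (auto simp: Aall_def N_def)
    qed
    have "measure (P \<infinity>) {\<omega> \<in> space (P \<infinity>). enat l \<le> T hc \<omega> \<and> T hc \<omega> < enat (l + m\<^sub>\<alpha>)}
        \<le> measure (P \<infinity>) (space (P \<infinity>) - Aall)"
      by (rule Pi.finite_measure_mono[OF subE]) (use Aalls in auto)
    also have "\<dots> = 1 - measure (P \<infinity>) Aall" by (rule Pi.prob_compl[OF Aalls])
    finally show "measure (P \<infinity>) {\<omega> \<in> space (P \<infinity>). enat l \<le> T hc \<omega> \<and> T hc \<omega> < enat (l + m\<^sub>\<alpha>)}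
        \<le> 1 - (Phi ((hc - real m * \<mu>y0) / sqrt (real m * \<sigma>y2))) ^ m\<^sub>\<alpha>"
      using low unfolding \<Phi>0_def by linarith
  qed
  have thr: "P_fa (P \<infinity>) (T (sqrt (real m * \<sigma>y2) * Phi_inv ((1 - \<alpha>) powr (1 / real m\<^sub>\<alpha>)) + real m * \<mu>y0)) m\<^sub>\<alpha> \<le> \<alpha>"
    if "0 < \<alpha>" "\<alpha> < 1"
  proof -
    define p where "p = (1 - \<alpha>) powr (1 / real m\<^sub>\<alpha>)"
    have p0: "0 < p" using that by (simp add: p_def)
    have p1: "p < 1"
    proof -
      have "p = 1 / (1 / (1 - \<alpha>)) powr (1 / real m\<^sub>\<alpha>)"
        using that by (simp add: p_def powr_divide)
      moreover have "1 < (1 / (1 - \<alpha>)) powr (1 / real m\<^sub>\<alpha>)"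
        using that m\<alpha> by (intro gr_one_powr) (auto simp: field_simps)
      ultimately show ?thesis by (simp add: divide_less_eq)
    qed
    have pp: "p ^ m\<^sub>\<alpha> = 1 - \<alpha>"
    proof -
      have "p ^ m\<^sub>\<alpha> = p powr real m\<^sub>\<alpha>" using p0 by (simp add: powr_realpow)
      also have "\<dots> = (1 - \<alpha>) powr (1 / real m\<^sub>\<alpha> * real m\<^sub>\<alpha>)" by (simp add: p_def powr_powr)
      also have "\<dots> = 1 - \<alpha>" using m\<alpha> that by simp
      finally show ?thesis .
    qed
    have "(sqrt (real m * \<sigma>y2) * Phi_inv p + real m * \<mu>y0 - real m * \<mu>y0) / sqrt (real m * \<sigma>y2) = Phi_inv p"
    proof -
      have gen: "(s * q + c - c) / s = q" if "s > 0" for s q c :: real using that by simp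
      show ?thesis by (rule gen[OF sqp])
    qed
    then have "Phi ((sqrt (real m * \<sigma>y2) * Phi_inv p + real m * \<mu>y0 - real m * \<mu>y0) / sqrt (real m * \<sigma>y2)) = p"
      using Phi_Phi_inv[OF p0 p1] by simp
    then show ?thesis using fa[of "sqrt (real m * \<sigma>y2) * Phi_inv p + real m * \<mu>y0"] pp unfolding p_def by simp
  qed
  show ?thesis using md fa[of h] thr by blast
qed

end
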